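(* Let $d\ge1$, let $S\subset\mathbb R^d$ be a regular simplex of unit side length, let $k,z\ge1$ be integers and set $s=zkd$. Let $A_s$ be the collection of $(d+1)^s$ simplices in the $s$-stage uniform subdivision of $S$. Then at most a $z(1-e^{-d})^k$ fraction of the simplices in $A_s$ have diameter larger than $(d/(d+1))^z$.
   Context: The $i$-stage uniform subdivision of a simplex $S'$ is defined recursively: the $0$-stage subdivision is $\{S'\}$; the $(i+1)$-stage subdivision is obtained from the $i$-stage subdivision by replacing each simplex $T$ in it, with vertices $v_0,\dots,v_d$ and barycenter $b=(v_0+\dots+v_d)/(d+1)$, by the $d+1$ simplices obtained from $T$ by replacing one vertex $v_m$ with $b$ ($m=0,\dots,d$). Thus the $i$-stage subdivision consists of $(d+1)^i$ simplices. The diameter of a simplex is the largest distance between two of its vertices. *)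

theory Defs
  imports "HOL-Analysis.Analysis"
begin

text \<open>A simplex is represented by the list of its vertices (v_0,...,v_d).\<close>

definition barycenter :: "'a::real_vector list \<Rightarrow> 'a" where
  "barycenter vs = (1 / real (length vs)) *\<^sub>R sum_list vs"

definition children :: "'a::real_vector list \<Rightarrow> 'a list list" where
  "children vs = map (\<lambda>m. vs[m := barycenter vs]) [0..<length vs]"

fun subdiv :: "nat \<Rightarrow> 'a::real_vector list \<Rightarrow> 'a list list" where
  "subdiv 0 T = [T]"
| "subdiv (Suc i) T = concat (map children (subdiv i T))"

definition regular_unit_simplex :: "'a::real_normed_vector list \<Rightarrow> nat \<Rightarrow> bool" where
  "regular_unit_simplex vs d \<longleftrightarrow> length vs = d + 1 \<and>
     (\<forall>i<d+1. \<forall>j<d+1. i \<noteq> j \<longrightarrow> dist (vs!i) (vs!j) = 1)"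

end

theory Submission
  imports Defs
begin


definition step :: "'a::real_vector list \<Rightarrow> nat \<Rightarrow> 'a list" where
  "step T m = T[m := barycenter T]"

fun run :: "'a::real_vector list \<Rightarrow> nat list \<Rightarrow> 'a list" where
  "run T [] = T"
| "run T (m # ms) = step (run T ms) m"

lemma length_run[simp]: "length (run T ms) = length T"
  by (induction ms) (auto simp: step_def)

lemma run_append: "run T (xs @ ys) = run (run T ys) xs"
  by (induction xs) auto

lemma subdiv_run: "subdiv i T = map (run T) (List.n_lists i [0..<length T])"
  by (induction i) (auto simp: map_concat o_def children_def step_def)

lemma length_n_lists': "length (List.n_lists n xs) = length xs ^ n"
  by (induction n) (auto simp: length_concat o_def sum_list_triv)

lemma distinct_n_lists': "distinct xs \<Longrightarrow> distinct (List.n_lists n xs)"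
proof (induction n)
  case 0 then show ?case by simp
next
  case (Suc n)
  show ?case
  proof (cases xs)
    case Nil then show ?thesis by simp
  next
    case (Cons a as)
    have inj: "inj_on (\<lambda>ys. map (\<lambda>y. y # ys) xs) (set (List.n_lists n xs))"
      using Cons by (auto simp: inj_on_def)
    show ?thesis
    proof (simp only: List.n_lists.simps, rule distinct_concat)
      show "distinct (map (\<lambda>ys. map (\<lambda>y. y # ys) xs) (List.n_lists n xs))"
        using Suc inj by (simp add: distinct_map)
      show "distinct ys" if "ys \<in> set (map (\<lambda>ys. map (\<lambda>y. y # ys) xs) (List.n_lists n xs))" for ys
        using that Suc.prems by (auto simp: distinct_map inj_on_def)
      show "set ys \<inter> set zs = {}" if "ys \<in> set (map (\<lambda>ys. map (\<lambda>y. y # ys) xs) (List.n_lists n xs))"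
        "zs \<in> set (map (\<lambda>ys. map (\<lambda>y. y # ys) xs) (List.n_lists n xs))" "ys \<noteq> zs" for ys zs
        using that by auto
    qed
  qed
qed

lemma length_filter_subdiv:
  "length (filter P (subdiv i T)) = card {ms. length ms = i \<and> set ms \<subseteq> {0..<length T} \<and> P (run T ms)}"
proof -
  have "length (filter P (subdiv i T)) = length (filter (P \<circ> run T) (List.n_lists i [0..<length T]))"
    by (simp add: subdiv_run filter_map)
  also have "\<dots> = card (set (filter (P \<circ> run T) (List.n_lists i [0..<length T])))"
    by (rule distinct_card[symmetric]) (simp add: distinct_n_lists')
  also have "set (filter (P \<circ> run T) (List.n_lists i [0..<length T])) = {ms. length ms = i \<and> set ms \<subseteq> {0..<length T} \<and> P (run T ms)}"
    by (auto simp: set_n_lists)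
  finally show ?thesis .
qed

lemma length_subdiv: "length (subdiv i T) = length T ^ i"
  by (simp add: subdiv_run length_n_lists')

lemma card_split:
  fixes A :: "'b set"
  assumes "finite A"
  shows "card {ms. length ms = a + b \<and> set ms \<subseteq> A \<and> P ms} =
    (\<Sum>y\<in>{y. length y = b \<and> set y \<subseteq> A}. card {x. length x = a \<and> set x \<subseteq> A \<and> P (x @ y)})"
proof -
  let ?B = "{y. length y = b \<and> set y \<subseteq> A}"
  let ?F = "\<lambda>y. (\<lambda>x. x @ y) ` {x. length x = a \<and> set x \<subseteq> A \<and> P (x @ y)}"
  have eq: "{ms. length ms = a + b \<and> set ms \<subseteq> A \<and> P ms} = (\<Union>y\<in>?B. ?F y)"
  proof (intro equalityI subsetI)
    fix ms assume "ms \<in> {ms. length ms = a + b \<and> set ms \<subseteq> A \<and> P ms}"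
    then have h: "length ms = a + b" "set ms \<subseteq> A" "P ms" by auto
    have m1: "drop a ms \<in> ?B" using h set_drop_subset[of a ms] by auto
    have m2: "take a ms \<in> {x. length x = a \<and> set x \<subseteq> A \<and> P (x @ drop a ms)}"
      using h set_take_subset[of a ms] by auto
    have "ms \<in> ?F (drop a ms)"
      by (rule image_eqI[OF _ m2]) simp
    then show "ms \<in> (\<Union>y\<in>?B. ?F y)" using m1 by blast
  next
    fix ms assume "ms \<in> (\<Union>y\<in>?B. ?F y)"
    then obtain y where y: "y \<in> ?B" and msF: "ms \<in> ?F y" by (rule UN_E)
    from msF obtain x where "x \<in> {x. length x = a \<and> set x \<subseteq> A \<and> P (x @ y)}" and ms: "ms = x @ y"
      by (rule imageE)
    then show "ms \<in> {ms. length ms = a + b \<and> set ms \<subseteq> A \<and> P ms}" using y by simp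
  qed
  have fin: "finite ?B" by (rule finite_subset[OF _ finite_lists_length_eq[OF assms, of b]]) blast
  have "card (\<Union>y\<in>?B. ?F y) = (\<Sum>y\<in>?B. card (?F y))"
  proof (rule card_UN_disjoint[OF fin])
    show "\<forall>i\<in>?B. finite (?F i)"
    proof
      fix i show "finite (?F i)"
        by (rule finite_imageI, rule finite_subset[OF _ finite_lists_length_eq[OF assms, of a]]) blast
    qed
    show "\<forall>i\<in>?B. \<forall>j\<in>?B. i \<noteq> j \<longrightarrow> ?F i \<inter> ?F j = {}"
    proof (intro ballI impI)
      fix i j assume "i \<in> ?B" "j \<in> ?B" "i \<noteq> j"
      then have lij: "length i = length j" by simp
      show "?F i \<inter> ?F j = {}"
      proof (rule ccontr)
        assume "?F i \<inter> ?F j \<noteq> {}"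
        then obtain x x' where "x @ i = x' @ j" by blast
        then have "i = j" using lij append_eq_append_conv by blast
        then show False using \<open>i \<noteq> j\<close> by simp
      qed
    qed
  qed
  also have "\<dots> = (\<Sum>y\<in>?B. card {x. length x = a \<and> set x \<subseteq> A \<and> P (x @ y)})"
    by (intro sum.cong refl card_image) (simp add: inj_on_def)
  finally show ?thesis unfolding eq .
qed



lemma bary_dist:
  fixes T :: "'a::real_normed_vector list"
  assumes len: "length T = L" and L: "L > 0"
    and D: "\<forall>i<L. \<forall>j<L. dist (T!i) (T!j) \<le> D" and j: "j < L"
  shows "dist (barycenter T) (T!j) \<le> (real L - 1) / real L * D"
proof -
  have sl: "sum_list T = (\<Sum>i\<in>{0..<L}. T!i)"
    using len by (simp add: sum_list_sum_nth)
  have cst: "(\<Sum>i\<in>{0..<L}. T!j) = real L *\<^sub>R T!j"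
    using sum_constant_scaleR[of "T!j" "{0..<L}"] by simp
  have "barycenter T - T!j = (1 / real L) *\<^sub>R (\<Sum>i\<in>{0..<L}. (T!i - T!j))"
    using L len by (simp add: barycenter_def sl sum_subtractf scaleR_diff_right cst)
  then have "dist (barycenter T) (T!j) = (1 / real L) * norm (\<Sum>i\<in>{0..<L}. (T!i - T!j))"
    by (simp add: dist_norm)
  also have "\<dots> \<le> 1 / real L * ((real L - 1) * D)"
  proof (rule mult_left_mono)
    have "norm (\<Sum>i\<in>{0..<L}. (T!i - T!j)) \<le> (\<Sum>i\<in>{0..<L}. norm (T!i - T!j))"
      by (rule norm_sum)
    also have "(\<Sum>i\<in>{0..<L}. norm (T!i - T!j)) = (\<Sum>i\<in>{0..<L}-{j}. norm (T!i - T!j))"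
      using j by (subst sum.remove[of _ j]) auto
    also have "\<dots> \<le> (\<Sum>i\<in>{0..<L}-{j}. D)"
      using D j by (intro sum_mono) (auto simp: dist_norm)
    also have "\<dots> = (real L - 1) * D"
      using j by (simp add: of_nat_diff)
    finally show "norm (\<Sum>i\<in>{0..<L}. (T!i - T!j)) \<le> (real L - 1) * D" .
  qed simp
  finally have "dist (barycenter T) (T!j) \<le> 1 / real L * ((real L - 1) * D)" .
  then show ?thesis by simp
qed

lemma run_inv:
  fixes T :: "'a::real_normed_vector list"
  assumes len: "length T = L" and L: "L > 0"
    and D: "\<forall>i<L. \<forall>j<L. dist (T!i) (T!j) \<le> D" and ms: "set ms \<subseteq> {0..<L}"
  shows "(\<forall>i<L. \<forall>j<L. dist (run T ms!i) (run T ms!j) \<le> D) \<and>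
         (\<forall>i\<in>set ms. \<forall>j<L. dist (run T ms!i) (run T ms!j) \<le> (real L - 1) / real L * D)"
  using ms
proof (induction ms)
  case Nil then show ?case using D by simp
next
  case (Cons m ms)
  define R where "R = run T ms"
  define b where "b = barycenter R"
  have lenR: "length R = L" using len by (simp add: R_def)
  have m: "m < L" using Cons.prems by auto
  have IH1: "\<forall>i<L. \<forall>j<L. dist (R!i) (R!j) \<le> D"
   and IH2: "\<forall>i\<in>set ms. \<forall>j<L. dist (R!i) (R!j) \<le> (real L - 1) / real L * D"
    using Cons by (auto simp: R_def)
  have D0: "0 \<le> D" using D L by (metis dist_self)
  have cD: "(real L - 1) / real L * D \<le> D"
    using D0 L by (simp add: divide_le_eq mult_le_cancel_right1 field_simps)
  have bd: "\<And>j. j < L \<Longrightarrow> dist b (R!j) \<le> (real L - 1) / real L * D"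
    unfolding b_def by (rule bary_dist[OF lenR L IH1])
  have nth: "\<And>i. i < L \<Longrightarrow> run T (m#ms) ! i = (if i = m then b else R!i)"
    using lenR by (simp add: R_def b_def step_def)
  have c0: "0 \<le> (real L - 1) / real L * D" using D0 L by simp
  have P2: "\<forall>i\<in>set (m#ms). \<forall>j<L. dist (run T (m#ms)!i) (run T (m#ms)!j) \<le> (real L - 1) / real L * D"
  proof (intro ballI allI impI)
    fix i j assume i: "i \<in> set (m#ms)" and j: "j < L"
    have iL: "i < L" using i Cons.prems by auto
    show "dist (run T (m#ms)!i) (run T (m#ms)!j) \<le> (real L - 1) / real L * D"
    proof (cases "i = m")
      case True then show ?thesis
        using bd j c0 by (auto simp del: run.simps simp: nth iL m)
    next
      case False
      then have "i \<in> set ms" using i by auto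
      then show ?thesis using False IH2 bd[OF iL] j iL
        by (auto simp del: run.simps simp: nth dist_commute)
    qed
  qed
  have P1: "\<forall>i<L. \<forall>j<L. dist (run T (m#ms)!i) (run T (m#ms)!j) \<le> D"
  proof (intro allI impI)
    fix i j assume i: "i < L" and j: "j < L"
    show "dist (run T (m#ms)!i) (run T (m#ms)!j) \<le> D"
    proof (cases "i = m \<or> j = m")
      case True
      then have "dist (run T (m#ms)!i) (run T (m#ms)!j) \<le> (real L - 1) / real L * D"
        using P2 i j by (metis dist_commute list.set_intros(1))
      then show ?thesis using cD by linarith
    next
      case False then show ?thesis using IH1 i j by (simp del: run.simps add: nth)
    qed
  qed
  show ?case using P1 P2 by blast
qed

lemma pair_le_diam:
  fixes T :: "'a::real_normed_vector list"
  shows "\<forall>i<length T. \<forall>j<length T. dist (T!i) (T!j) \<le> diameter (set T)"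
  by (auto intro!: diameter_bounded_bound finite_imp_bounded)

lemma diam_le_pairs:
  fixes T :: "'a::real_normed_vector list"
  assumes "0 \<le> D" "\<forall>i<length T. \<forall>j<length T. dist (T!i) (T!j) \<le> D"
  shows "diameter (set T) \<le> D"
  using assms by (intro diameter_le) (auto simp: in_set_conv_nth dist_norm)

lemma diam_run_le:
  fixes T :: "'a::real_normed_vector list"
  assumes L: "length T > 0" and ms: "set ms \<subseteq> {0..<length T}"
  shows "diameter (set (run T ms)) \<le> diameter (set T)"
  using run_inv[OF refl L pair_le_diam ms] diameter_ge_0[of "set T"]
  by (intro diam_le_pairs) auto

lemma diam_run_good:
  fixes T :: "'a::real_normed_vector list"
  assumes L: "length T = L" "L > 0" and ms: "set ms \<subseteq> {0..<L}"
    and lm: "length ms = L - 1" and dm: "distinct ms"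
  shows "diameter (set (run T ms)) \<le> (real L - 1) / real L * diameter (set T)"
proof -
  let ?D = "diameter (set T)"
  have pd: "\<forall>i<L. \<forall>j<L. dist (T!i) (T!j) \<le> ?D" using pair_le_diam[of T] L(1) by simp
  note inv = run_inv[OF L pd ms]
  have D0: "0 \<le> ?D" by (rule diameter_ge_0) (simp add: finite_imp_bounded)
  have c0: "0 \<le> (real L - 1) / real L * ?D" using L(2) D0 by (auto intro!: mult_nonneg_nonneg divide_nonneg_nonneg)
  have cov: "i \<in> set ms \<or> j \<in> set ms" if ij: "i < L" "j < L" "i \<noteq> j" for i j
  proof (rule ccontr)
    assume "\<not> (i \<in> set ms \<or> j \<in> set ms)"
    then have sub: "{i, j} \<subseteq> {0..<L} - set ms" using ij by auto
    have "card ({0..<L} - set ms) = L - (L - 1)"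
      using ms by (simp add: card_Diff_subset distinct_card[OF dm] lm)
    also have "\<dots> = 1" using L(2) by simp
    finally have "card {i, j} \<le> 1" using card_mono[OF _ sub] by simp
    then show False using ij by simp
  qed
  show ?thesis
  proof (rule diam_le_pairs[OF c0], intro allI impI)
    fix i j assume i: "i < length (run T ms)" and j: "j < length (run T ms)"
    then have i': "i < L" and j': "j < L" using L by auto
    show "dist (run T ms ! i) (run T ms ! j) \<le> (real L - 1) / real L * ?D"
    proof (cases "i = j")
      case True then show ?thesis using c0 by simp
    next
      case False
      then have "i \<in> set ms \<or> j \<in> set ms" using cov i' j' by blast
      then show ?thesis using inv i' j' by (metis dist_commute)
    qed
  qed
qed



lemma card_Omega: "card {ms. length ms = n \<and> set ms \<subseteq> {0..<L::nat}} = L ^ n"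
proof -
  have "{ms. length ms = n \<and> set ms \<subseteq> {0..<L}} = {xs. set xs \<subseteq> {0..<L} \<and> length xs = n}" by auto
  then show ?thesis using card_lists_length_eq[of "{0..<L}" n] by simp
qed

lemma finite_Omega: "finite {ms. length ms = n \<and> set ms \<subseteq> {0..<L::nat}}"
  by (rule finite_subset[OF _ finite_lists_length_eq[of "{0..<L}" n]]) auto

lemma block_bound:
  fixes T :: "'a::real_normed_vector list"
  assumes L: "length T = L" "L > 0"
  defines "q \<equiv> card {x. length x = L - 1 \<and> set x \<subseteq> {0..<L} \<and> \<not> distinct x}"
  shows "card {ms. length ms = k * (L - 1) \<and> set ms \<subseteq> {0..<L} \<and>
            (real L - 1) / real L * diameter (set T) < diameter (set (run T ms))} \<le> q ^ k"
proof (induction k)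
  case 0
  have "{ms. length ms = 0 * (L - 1) \<and> set ms \<subseteq> {0..<L} \<and>
            (real L - 1) / real L * diameter (set T) < diameter (set (run T ms))} \<subseteq> {[]}" by auto
  then have "card {ms. length ms = 0 * (L - 1) \<and> set ms \<subseteq> {0..<L} \<and>
            (real L - 1) / real L * diameter (set T) < diameter (set (run T ms))} \<le> card {[] :: nat list}"
    by (rule card_mono[rotated]) simp
  then show ?case by simp
next
  case (Suc k)
  let ?c = "(real L - 1) / real L"
  let ?D = "diameter (set T)"
  let ?E = "{ms. length ms = k * (L - 1) \<and> set ms \<subseteq> {0..<L} \<and> ?c * ?D < diameter (set (run T ms))}"
  let ?O = "{y. length y = k * (L - 1) \<and> set y \<subseteq> {0..<L}}"
  let ?NG = "{x. length x = L - 1 \<and> set x \<subseteq> {0..<L} \<and> \<not> distinct x}"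
  have c0: "0 \<le> ?c" using L(2) by (auto intro!: divide_nonneg_nonneg)
  have "card {ms. length ms = Suc k * (L - 1) \<and> set ms \<subseteq> {0..<L} \<and> ?c * ?D < diameter (set (run T ms))}
      = card {ms. length ms = (L - 1) + k * (L - 1) \<and> set ms \<subseteq> {0..<L} \<and> ?c * ?D < diameter (set (run T ms))}"
    by simp
  also have "\<dots> = (\<Sum>y\<in>?O. card {x. length x = L - 1 \<and> set x \<subseteq> {0..<L} \<and> ?c * ?D < diameter (set (run T (x @ y)))})"
    by (rule card_split) simp
  also have "\<dots> \<le> (\<Sum>y\<in>?O. if y \<in> ?E then q else 0)"
  proof (rule sum_mono)
    fix y assume y: "y \<in> ?O"
    let ?T1 = "run T y"
    have len1: "length ?T1 = L" using L by simp
    have d1: "diameter (set ?T1) \<le> ?D" using diam_run_le[of T y] y L by auto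
    show "card {x. length x = L - 1 \<and> set x \<subseteq> {0..<L} \<and> ?c * ?D < diameter (set (run T (x @ y)))}
          \<le> (if y \<in> ?E then q else 0)"
    proof (cases "y \<in> ?E")
      case True
      have "{x. length x = L - 1 \<and> set x \<subseteq> {0..<L} \<and> ?c * ?D < diameter (set (run T (x @ y)))} \<subseteq> ?NG"
      proof (rule subsetI)
        fix x assume x: "x \<in> {x. length x = L - 1 \<and> set x \<subseteq> {0..<L} \<and> ?c * ?D < diameter (set (run T (x @ y)))}"
        have "\<not> distinct x"
        proof
          assume dx: "distinct x"
          have "diameter (set (run ?T1 x)) \<le> ?c * diameter (set ?T1)"
            using diam_run_good[OF len1 L(2)] x dx by auto
          also have "\<dots> \<le> ?c * ?D" by (rule mult_left_mono[OF d1 c0])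
          finally show False using x by (auto simp: run_append)
        qed
        then show "x \<in> ?NG" using x by simp
      qed
      then have sub: "{x. length x = L - 1 \<and> set x \<subseteq> {0..<L} \<and> ?c * ?D < diameter (set (run T (x @ y)))} \<subseteq> ?NG" .
      have "card {x. length x = L - 1 \<and> set x \<subseteq> {0..<L} \<and> ?c * ?D < diameter (set (run T (x @ y)))} \<le> q"
      proof -
        have fNG: "finite ?NG" by (rule finite_subset[OF _ finite_Omega[of "L - 1" L]]) auto
        show ?thesis unfolding q_def by (rule card_mono[OF fNG sub])
      qed
      then show ?thesis using True by simp
    next
      case False
      then have "diameter (set ?T1) \<le> ?c * ?D" using y by auto
      have "{x. length x = L - 1 \<and> set x \<subseteq> {0..<L} \<and> ?c * ?D < diameter (set (run T (x @ y)))} = {}"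
      proof (intro equalityI subsetI)
        fix x assume x: "x \<in> {x. length x = L - 1 \<and> set x \<subseteq> {0..<L} \<and> ?c * ?D < diameter (set (run T (x @ y)))}"
        have "diameter (set (run ?T1 x)) \<le> diameter (set ?T1)"
          using diam_run_le[of ?T1 x] len1 L(2) x by force
        then show "x \<in> {}" using x \<open>diameter (set ?T1) \<le> ?c * ?D\<close> by (simp add: run_append)
      qed simp
      then show ?thesis by (simp only: card.empty)
    qed
  qed
  also have "\<dots> = (\<Sum>y\<in>?O \<inter> ?E. q)"
    by (rule sum.inter_restrict[symmetric]) (rule finite_Omega)
  also have "\<dots> = card ?E * q"
  proof -
    have "?O \<inter> ?E = ?E" by auto
    then show ?thesis by simp
  qed
  also have "\<dots> \<le> q ^ k * q" using Suc.IH by simp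
  also have "\<dots> = q ^ Suc k" by simp
  finally show ?case .
qed



lemma main_bound:
  fixes T :: "'a::real_normed_vector list"
  assumes L: "length T = L" "L > 0"
  defines "q \<equiv> card {x. length x = L - 1 \<and> set x \<subseteq> {0..<L} \<and> \<not> distinct x}"
  shows "real (card {ms. length ms = z * (k * (L - 1)) \<and> set ms \<subseteq> {0..<L} \<and>
            ((real L - 1) / real L) ^ z * diameter (set T) < diameter (set (run T ms))}) * real L ^ (k * (L - 1))
         \<le> real z * real q ^ k * real L ^ (z * (k * (L - 1)))"
  using L
proof (induction z arbitrary: T)
  case 0
  have "{ms. length ms = 0 * (k * (L - 1)) \<and> set ms \<subseteq> {0..<L} \<and>
            ((real L - 1) / real L) ^ 0 * diameter (set T) < diameter (set (run T ms))} = {}" by auto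
  then show ?case by (simp only: card.empty)
next
  case (Suc z)
  let ?c = "(real L - 1) / real L"
  let ?D = "diameter (set T)"
  let ?K = "k * (L - 1)"
  let ?N = "z * (k * (L - 1))"
  let ?E = "{ms. length ms = ?K \<and> set ms \<subseteq> {0..<L} \<and> ?c * ?D < diameter (set (run T ms))}"
  let ?O = "{y. length y = ?K \<and> set y \<subseteq> {0..<L}}"
  let ?f = "\<lambda>y. card {x. length x = ?N \<and> set x \<subseteq> {0..<L} \<and> ?c ^ Suc z * ?D < diameter (set (run T (x @ y)))}"
  have c0: "0 \<le> ?c" using L(2) by (auto intro!: divide_nonneg_nonneg)
  have len: "Suc z * ?K = ?N + ?K" by simp
  have "card {ms. length ms = Suc z * ?K \<and> set ms \<subseteq> {0..<L} \<and> ?c ^ Suc z * ?D < diameter (set (run T ms))}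
      = card {ms. length ms = ?N + ?K \<and> set ms \<subseteq> {0..<L} \<and> ?c ^ Suc z * ?D < diameter (set (run T ms))}"
    by (simp only: len)
  also have "\<dots> = (\<Sum>y\<in>?O. ?f y)"
    by (rule card_split) simp
  finally have cs: "card {ms. length ms = Suc z * ?K \<and> set ms \<subseteq> {0..<L} \<and> ?c ^ Suc z * ?D < diameter (set (run T ms))}
      = (\<Sum>y\<in>?O. ?f y)" .
  have each: "real (?f y) * real L ^ ?K \<le> (if y \<in> ?E then real L ^ ?N * real L ^ ?K else 0) + real z * real q ^ k * real L ^ ?N"
    if y: "y \<in> ?O" for y
  proof -
    let ?T1 = "run T y"
    have len1: "length ?T1 = L" using Suc.prems by simp
    have fin: "finite {x. length x = ?N \<and> set x \<subseteq> {0..<L} \<and> ?c ^ Suc z * ?D < diameter (set (run T (x @ y)))}"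
      by (rule finite_subset[OF _ finite_Omega[of ?N L]]) auto
    have nn: "0 \<le> real z * real q ^ k * real L ^ ?N" by simp
    show ?thesis
    proof (cases "y \<in> ?E")
      case True
      have "?f y \<le> card {x. length x = ?N \<and> set x \<subseteq> {0..<L}}"
        by (rule card_mono[OF finite_Omega]) auto
      then have "?f y \<le> L ^ ?N" by (simp add: card_Omega)
      then have "real (?f y) \<le> real (L ^ ?N)" by (rule of_nat_mono)
      then have "real (?f y) \<le> real L ^ ?N" by simp
      then have "real (?f y) * real L ^ ?K \<le> real L ^ ?N * real L ^ ?K"
        by (rule mult_right_mono) simp
      then show ?thesis using nn by (subst if_P[OF True]) linarith
    next
      case False
      then have d1: "diameter (set ?T1) \<le> ?c * ?D" using y by auto
      have "?f y \<le> card {x. length x = ?N \<and> set x \<subseteq> {0..<L} \<and> ?c ^ z * diameter (set ?T1) < diameter (set (run ?T1 x))}"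
      proof (rule card_mono)
        show "finite {x. length x = ?N \<and> set x \<subseteq> {0..<L} \<and> ?c ^ z * diameter (set ?T1) < diameter (set (run ?T1 x))}"
          by (rule finite_subset[OF _ finite_Omega[of ?N L]]) auto
        have "?c ^ z * diameter (set ?T1) \<le> ?c ^ z * (?c * ?D)"
          by (rule mult_left_mono[OF d1]) (simp add: c0)
        also have "\<dots> = ?c ^ Suc z * ?D" by simp
        finally have le: "?c ^ z * diameter (set ?T1) \<le> ?c ^ Suc z * ?D" .
        show "{x. length x = ?N \<and> set x \<subseteq> {0..<L} \<and> ?c ^ Suc z * ?D < diameter (set (run T (x @ y)))}
           \<subseteq> {x. length x = ?N \<and> set x \<subseteq> {0..<L} \<and> ?c ^ z * diameter (set ?T1) < diameter (set (run ?T1 x))}"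
        proof (rule subsetI)
          fix x assume x: "x \<in> {x. length x = ?N \<and> set x \<subseteq> {0..<L} \<and> ?c ^ Suc z * ?D < diameter (set (run T (x @ y)))}"
          then have "?c ^ z * diameter (set ?T1) < diameter (set (run ?T1 x))"
            using le by (simp add: run_append)
          then show "x \<in> {x. length x = ?N \<and> set x \<subseteq> {0..<L} \<and> ?c ^ z * diameter (set ?T1) < diameter (set (run ?T1 x))}"
            using x by simp
        qed
      qed
      then have "real (?f y) * real L ^ ?K \<le>
          real (card {x. length x = ?N \<and> set x \<subseteq> {0..<L} \<and> ?c ^ z * diameter (set ?T1) < diameter (set (run ?T1 x))}) * real L ^ ?K"
        by (intro mult_right_mono) simp_all
      also have "\<dots> \<le> real z * real q ^ k * real L ^ ?N"
        using Suc.IH[OF len1 Suc.prems(2)] unfolding q_def by simp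
      finally show ?thesis by (subst if_not_P[OF False]) linarith
    qed
  qed
  have "real (card {ms. length ms = Suc z * ?K \<and> set ms \<subseteq> {0..<L} \<and> ?c ^ Suc z * ?D < diameter (set (run T ms))}) * real L ^ ?K
      = (\<Sum>y\<in>?O. real (?f y) * real L ^ ?K)"
    by (simp only: cs of_nat_sum sum_distrib_right)
  also have "\<dots> \<le> (\<Sum>y\<in>?O. (if y \<in> ?E then real L ^ ?N * real L ^ ?K else 0) + real z * real q ^ k * real L ^ ?N)"
    by (rule sum_mono) (rule each)
  also have "\<dots> = (\<Sum>y\<in>?O. if y \<in> ?E then real L ^ ?N * real L ^ ?K else 0) + real (card ?O) * (real z * real q ^ k * real L ^ ?N)"
    by (simp add: sum.distrib)
  also have "(\<Sum>y\<in>?O. if y \<in> ?E then real L ^ ?N * real L ^ ?K else 0) = (\<Sum>y\<in>?O \<inter> ?E. real L ^ ?N * real L ^ ?K)"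
    by (rule sum.inter_restrict[symmetric]) (rule finite_Omega)
  also have "?O \<inter> ?E = ?E" by auto
  also have "(\<Sum>y\<in>?E. real L ^ ?N * real L ^ ?K) = real (card ?E) * (real L ^ ?N * real L ^ ?K)" by simp
  also have "real (card ?O) = real L ^ ?K" by (simp add: card_Omega)
  also have "real (card ?E) \<le> real q ^ k"
  proof -
    have "card ?E \<le> q ^ k" unfolding q_def by (rule block_bound[OF Suc.prems])
    then have "real (card ?E) \<le> real (q ^ k)" by (rule of_nat_mono)
    then show ?thesis by simp
  qed
  then have "real (card ?E) * (real L ^ ?N * real L ^ ?K) + real L ^ ?K * (real z * real q ^ k * real L ^ ?N)
      \<le> real q ^ k * (real L ^ ?N * real L ^ ?K) + real L ^ ?K * (real z * real q ^ k * real L ^ ?N)"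
    by (intro add_right_mono mult_right_mono) simp_all
  also have "\<dots> = real (Suc z) * real q ^ k * real L ^ (Suc z * ?K)"
    by (simp only: len power_add) (simp add: algebra_simps)
  finally show ?case by simp
qed



lemma exp_ge_pow_fact:
  fixes x :: real
  assumes "0 \<le> x"
  shows "x ^ n / fact n \<le> exp x"
proof -
  have "(\<Sum>m\<le>n. x ^ m / fact m) \<le> exp x"
    using assms summable_exp_generic[of x]
    by (auto simp: exp_def divide_inverse ac_simps intro!: sum_le_suminf)
  moreover have "x ^ n / fact n \<le> (\<Sum>m\<le>n. x ^ m / fact m)"
    by (rule member_le_sum[of n "{..n}" "\<lambda>m. x ^ m / fact m"]) (use assms in auto)
  ultimately show ?thesis by linarith
qed

lemma fact_bound:
  assumes L: "L \<ge> (2::nat)"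
  shows "real L ^ (L - 1) \<le> exp (real (L - 1)) * fact L"
proof -
  have "real L ^ L / fact L \<le> exp (real L)" by (rule exp_ge_pow_fact) simp
  then have h: "real L ^ L \<le> exp (real L) * fact L"
    by (simp add: divide_le_eq)
  have LL: "real L ^ L = real L * real L ^ (L - 1)"
    using L by (metis Suc_diff_1 le_trans one_le_numeral not_one_le_zero power_Suc le_zero_eq linorder_not_le)
  have eL: "exp (real L) = exp 1 * exp (real (L - 1))"
    using L by (simp add: exp_add[symmetric] of_nat_diff)
  show ?thesis
  proof (cases "L = 2")
    case True
    have "exp (1::real) \<ge> 1" by simp
    then show ?thesis using True by (simp add: numeral_2_eq_2)
  next
    case False
    then have L3: "real L \<ge> 3" using L by simp
    have "real L * real L ^ (L - 1) \<le> exp 1 * (exp (real (L - 1)) * fact L)"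
      using h LL eL by (simp add: mult.assoc)
    also have "\<dots> \<le> real L * (exp (real (L - 1)) * fact L)"
      by (rule mult_right_mono) (use exp_le L3 in auto)
    finally show ?thesis using L by simp
  qed
qed

lemma q_eq:
  assumes L: "L \<ge> (1::nat)"
  shows "real (card {x. length x = L - 1 \<and> set x \<subseteq> {0..<L} \<and> \<not> distinct x}) = real L ^ (L - 1) - fact L"
proof -
  let ?O = "{x. length x = L - 1 \<and> set x \<subseteq> {0..<L}}"
  let ?DS = "{x. length x = L - 1 \<and> distinct x \<and> set x \<subseteq> {0..<L}}"
  have eq: "{x. length x = L - 1 \<and> set x \<subseteq> {0..<L} \<and> \<not> distinct x} = ?O - ?DS" by auto
  have sub: "?DS \<subseteq> ?O" by auto
  have fDS: "finite ?DS" by (rule finite_subset[OF sub finite_Omega])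
  have cDS: "card ?DS = \<Prod>{2..L}"
    using card_lists_distinct_length_eq[of "{0..<L}" "L - 1"] L by (simp add: numeral_2_eq_2)
  have "\<Prod>{1..L} = 1 * \<Prod>{Suc 1..L}" using L by (rule prod.atLeast_Suc_atMost)
  then have pf: "\<Prod>{2..L} = \<Prod>{1..L}" by (simp add: numeral_2_eq_2)
  have "card (?O - ?DS) = card ?O - card ?DS" by (rule card_Diff_subset[OF fDS sub])
  moreover have "card ?DS \<le> card ?O" by (rule card_mono[OF finite_Omega sub])
  ultimately have "real (card (?O - ?DS)) = real (card ?O) - real (card ?DS)" by simp
  also have "real (card ?O) = real L ^ (L - 1)" by (simp add: card_Omega)
  also have "real (card ?DS) = fact L"
  proof -
    have c1: "card ?DS = \<Prod>{1..L}" using cDS pf by simp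
    show ?thesis by (simp only: c1 fact_prod)
  qed
  finally show ?thesis by (simp only: eq)
qed



theorem lemma4:
  fixes S :: "(real^'n) list" and k z :: nat
  assumes "regular_unit_simplex S CARD('n)" and "k \<ge> 1" and "z \<ge> 1"
  shows "real (length (filter (\<lambda>T. diameter (set T) > (real CARD('n) / (real CARD('n) + 1)) ^ z)
                  (subdiv (z * k * CARD('n)) S)))
         \<le> real z * (1 - exp (- real CARD('n))) ^ k * real (length (subdiv (z * k * CARD('n)) S))"
proof -
  define d where "d = CARD('n)"
  define L where "L = length S"
  define K where "K = k * (L - 1)"
  define q where "q = card {x. length x = L - 1 \<and> set x \<subseteq> {0..<L} \<and> \<not> distinct x}"
  define c where "c = (real L - 1) / real L"
  define e where "e = 1 - exp (- real d)"
  have Ld: "L = d + 1" using assms(1) by (simp add: regular_unit_simplex_def L_def d_def)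
  have d1: "d \<ge> 1" unfolding d_def by (simp add: Suc_le_eq)
  have L2: "L \<ge> 2" using Ld d1 by simp
  have Lpos: "L > 0" using L2 by simp
  have cc: "c = real d / (real d + 1)" unfolding c_def using Ld by simp
  have c0: "0 \<le> c" unfolding cc by simp
  have s: "z * k * d = z * K" unfolding K_def using Ld by simp
  have D1: "diameter (set S) \<le> 1"
  proof (rule diam_le_pairs)
    show "\<forall>i<length S. \<forall>j<length S. dist (S ! i) (S ! j) \<le> 1"
      using assms(1) unfolding regular_unit_simplex_def by (metis dist_self order_refl zero_le_one)
  qed simp
  let ?P = "\<lambda>T. diameter (set T) > (real d / (real d + 1)) ^ z"
  let ?B = "{ms. length ms = z * K \<and> set ms \<subseteq> {0..<L} \<and> c ^ z * diameter (set S) < diameter (set (run S ms))}"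
  have len_f: "length (filter ?P (subdiv (z * k * d) S)) = card {ms. length ms = z * K \<and> set ms \<subseteq> {0..<L} \<and> ?P (run S ms)}"
    by (simp only: length_filter_subdiv s L_def)
  have "card {ms. length ms = z * K \<and> set ms \<subseteq> {0..<L} \<and> ?P (run S ms)} \<le> card ?B"
  proof (rule card_mono)
    show "finite ?B" by (rule finite_subset[OF _ finite_Omega[of "z * K" L]]) auto
    have "c ^ z * diameter (set S) \<le> c ^ z * 1"
      by (rule mult_left_mono[OF D1]) (simp add: c0)
    then have le: "c ^ z * diameter (set S) \<le> (real d / (real d + 1)) ^ z" by (simp add: cc)
    show "{ms. length ms = z * K \<and> set ms \<subseteq> {0..<L} \<and> ?P (run S ms)} \<subseteq> ?B"
    proof (rule subsetI)
      fix x assume x: "x \<in> {ms. length ms = z * K \<and> set ms \<subseteq> {0..<L} \<and> ?P (run S ms)}"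
      then have "c ^ z * diameter (set S) < diameter (set (run S x))" using le by simp
      then show "x \<in> ?B" using x by simp
    qed
  qed
  then have cnt: "real (length (filter ?P (subdiv (z * k * d) S))) \<le> real (card ?B)"
    by (simp only: len_f of_nat_le_iff)
  have mb: "real (card ?B) * real L ^ K \<le> real z * real q ^ k * real L ^ (z * K)"
    using main_bound[of S L z k] Lpos unfolding K_def q_def c_def L_def by simp
  have qb: "real q \<le> e * real L ^ d"
  proof -
    have "real q = real L ^ d - fact L" using q_eq[of L] L2 Ld unfolding q_def by simp
    moreover have "real L ^ d \<le> exp (real d) * fact L" using fact_bound[OF L2] Ld by simp
    then have "exp (- real d) * real L ^ d \<le> fact L"
      by (simp add: exp_minus field_simps)
    ultimately show ?thesis unfolding e_def by (simp add: algebra_simps)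
  qed
  have "real q ^ k \<le> (e * real L ^ d) ^ k" by (rule power_mono[OF qb]) simp
  also have "\<dots> = e ^ k * real L ^ K" unfolding K_def using Ld by (simp add: power_mult_distrib power_mult mult.commute)
  finally have qk: "real q ^ k \<le> e ^ k * real L ^ K" .
  have "real (card ?B) * real L ^ K \<le> real z * (e ^ k * real L ^ K) * real L ^ (z * K)"
    using mb qk by (smt (verit) mult_left_mono mult_right_mono of_nat_0_le_iff zero_le_power)
  then have "real (card ?B) * real L ^ K \<le> (real z * e ^ k * real L ^ (z * K)) * real L ^ K"
    by (simp add: algebra_simps)
  then have B: "real (card ?B) \<le> real z * e ^ k * real L ^ (z * K)"
    using Lpos by simp
  have lens: "real (length (subdiv (z * k * d) S)) = real L ^ (z * K)"
    by (simp add: length_subdiv L_def s)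
  show ?thesis
    using cnt B lens unfolding d_def e_def by simp
qed


end
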